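(* Let $D\ge2$ be an integer, let $(\rho^0_{kl})_{k,l=1}^D$ be a $D\times D$ density matrix (positive semidefinite, trace one), and let $(U_{mn})_{m,n=1}^D$ be a unitary matrix. Define $\mu_n=\sum_k|U_{nk}|^2\rho^0_{kk}$, $D_{\mathrm{eff}}=\bigl[\sum_n(\rho^0_{nn})^2\bigr]^{-1}$, $$\nu_{mn}=\sum_{k\neq l}U_{mk}U_{ml}^*U_{nk}^*U_{nl}|\rho^0_{kl}|^2,\qquad R=\sum_{m,n}\nu_{mn}\ln\mu_m\ln\mu_n .$$ Then $$R\le\frac{5(\ln D)^2}{D_{\mathrm{eff}}^{1/2}}+\frac{8(\ln D)^2}{D}+\frac{4(\ln D)^2}{D^2}.$$
   Context: In the sum defining $R$, terms with $\mu_m=0$ or $\mu_n=0$ are taken to be $0$ (for such indices $\nu_{mn}=0$). *)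

theory Defs
  imports Complex_Main
begin

text \<open>D x D complex matrices are represented as functions nat => nat => complex,
  with indices ranging over {0..<D} (i.e. the paper's 1..D shifted by one).\<close>

definition density_matrix :: "nat \<Rightarrow> (nat \<Rightarrow> nat \<Rightarrow> complex) \<Rightarrow> bool" where
  "density_matrix D \<rho> \<longleftrightarrow>
     (\<forall>x :: nat \<Rightarrow> complex.
        let q = (\<Sum>k<D. \<Sum>l<D. cnj (x k) * \<rho> k l * x l) in Im q = 0 \<and> Re q \<ge> 0)
     \<and> (\<Sum>k<D. \<rho> k k) = 1"

definition unitary_matrix :: "nat \<Rightarrow> (nat \<Rightarrow> nat \<Rightarrow> complex) \<Rightarrow> bool" where
  "unitary_matrix D U \<longleftrightarrow>
     (\<forall>m<D. \<forall>n<D. (\<Sum>k<D. U m k * cnj (U n k)) = (if m = n then 1 else 0))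
     \<and> (\<forall>m<D. \<forall>n<D. (\<Sum>k<D. cnj (U k m) * U k n) = (if m = n then 1 else 0))"

definition mu :: "nat \<Rightarrow> (nat \<Rightarrow> nat \<Rightarrow> complex) \<Rightarrow> (nat \<Rightarrow> nat \<Rightarrow> complex) \<Rightarrow> nat \<Rightarrow> real" where
  "mu D U \<rho> n = (\<Sum>k<D. (cmod (U n k))\<^sup>2 * Re (\<rho> k k))"

definition D_eff :: "nat \<Rightarrow> (nat \<Rightarrow> nat \<Rightarrow> complex) \<Rightarrow> real" where
  "D_eff D \<rho> = 1 / (\<Sum>n<D. (Re (\<rho> n n))\<^sup>2)"

definition nu :: "nat \<Rightarrow> (nat \<Rightarrow> nat \<Rightarrow> complex) \<Rightarrow> (nat \<Rightarrow> nat \<Rightarrow> complex) \<Rightarrow> nat \<Rightarrow> nat \<Rightarrow> complex" where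
  "nu D U \<rho> m n = (\<Sum>k<D. \<Sum>l<D. if k = l then 0 else
       U m k * cnj (U m l) * cnj (U n k) * U n l * complex_of_real ((cmod (\<rho> k l))\<^sup>2))"

text \<open>R is real (nu n m = cnj (nu m n)); we take its real part. Terms with
  mu_m = 0 or mu_n = 0 are 0 by convention.\<close>
definition R_val :: "nat \<Rightarrow> (nat \<Rightarrow> nat \<Rightarrow> complex) \<Rightarrow> (nat \<Rightarrow> nat \<Rightarrow> complex) \<Rightarrow> real" where
  "R_val D U \<rho> = Re (\<Sum>m<D. \<Sum>n<D.
       if mu D U \<rho> m = 0 \<or> mu D U \<rho> n = 0 then 0
       else nu D U \<rho> m n * complex_of_real (ln (mu D U \<rho> m) * ln (mu D U \<rho> n)))"

end

theory Submission
  imports Defs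
begin



lemma exp1_ge: "exp 1 \<ge> (53/20::real)"
proof -
  have "(1 + 1 / real 20) ^ 20 \<le> exp (1::real)"
    by (rule exp_ge_one_plus_x_over_n_power_n) auto
  moreover have "(53/20::real) \<le> (1 + 1 / real 20) ^ 20" by (simp add: power_divide)
  ultimately show ?thesis by linarith
qed

lemma ln2_ge: "ln (2::real) \<ge> 65/100"
proof -
  have "(1 - (65/100) / real 20) ^ 20 \<le> exp (-(65/100::real))"
    by (rule exp_ge_one_minus_x_over_n_power_n) auto
  moreover have "(1/2::real) \<le> (1 - (65/100) / real 20) ^ 20" by (simp add: power_divide)
  ultimately have "1/2 \<le> exp (-(65/100::real))" by linarith
  hence "exp (65/100::real) \<le> 2" by (simp add: exp_minus field_simps)
  thus ?thesis by (subst ln_ge_iff) auto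
qed

lemma xlog: assumes "0 < y" "y \<le> (1::real)"
  shows "y * ln (1/y) \<le> 1 / exp 1" "0 \<le> y * ln (1/y)"
proof -
  have "ln ((1/y) / exp 1) \<le> (1/y)/exp 1 - 1" using assms by (intro ln_le_minus_one) auto
  hence "ln (1/y) - 1 \<le> (1/y)/exp 1 - 1" using assms by (simp add: ln_div ln_mult)
  hence "ln (1/y) \<le> (1/y)/exp 1" by simp
  hence "y * ln (1/y) \<le> y * ((1/y)/exp 1)" using assms by (intro mult_left_mono) auto
  thus "y * ln (1/y) \<le> 1 / exp 1" using assms by simp
  show "0 \<le> y * ln (1/y)" using assms by simp
qed

lemma xlog2: assumes "0 < y" "y \<le> (1::real)"
  shows "y * (ln (1/y))\<^sup>2 \<le> 4 / (exp 1)\<^sup>2"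
proof -
  define s where "s = sqrt y"
  have s: "0 < s" "s \<le> 1" "y = s^2" using assms by (auto simp: s_def)
  have "ln (1/y) = 2 * ln (1/s)" using s by (simp add: ln_div ln_realpow)
  hence "y * (ln (1/y))\<^sup>2 = 4 * (s * ln (1/s))\<^sup>2" using s by (simp add: power2_eq_square)
  also have "\<dots> \<le> 4 * (1/exp 1)\<^sup>2"
    using xlog[OF s(1,2)] by (intro mult_left_mono power_mono) auto
  finally show ?thesis by (simp add: power_divide)
qed

lemma numeric: fixes L E :: real assumes "L \<ge> 65/100" "0 \<le> E" "E \<le> 20/53"
  shows "L * E + E^2 \<le> L^2"
proof -
  have "L * E \<le> L * (20/53)" using assms by (intro mult_left_mono) auto
  moreover have "E^2 \<le> (20/53)^2" using assms by (intro power_mono) auto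
  moreover have "L * (20/53) + (20/53)^2 \<le> L^2"
  proof -
    have "(L - 65/100) * (L + 65/100 - 20/53) \<ge> 0" using assms by (intro mult_nonneg_nonneg) auto
    moreover have "(L - 65/100) * (L + 65/100 - 20/53) = L*L - L*(20/53) - (65/100)*(65/100) + (65/100)*(20/53)" by (simp add: field_simps)
    ultimately have "L*L - L*(20/53) - (65/100)*(65/100) + (65/100)*(20/53) \<ge> 0" by linarith
    thus ?thesis unfolding power2_eq_square by linarith
  qed
  ultimately show ?thesis by linarith
qed

lemma elem:
  fixes x :: real and D :: nat
  assumes D: "D \<ge> 2" and x: "0 \<le> x" "x \<le> 1"
  shows "x * (if x = 0 then 0 else ln x)\<^sup>2 \<le> 4 * (ln (real D))\<^sup>2 * x + 8 * (ln (real D))\<^sup>2 / (real D)\<^sup>2"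
proof -
  define L where "L = ln (real D)"
  have "ln 2 \<le> ln (real D)" using D by (subst ln_le_cancel_iff) auto
  hence L: "L \<ge> 65/100" unfolding L_def using ln2_ge by linarith
  have Dp: "real D > 0" using D by auto
  have rhs0: "0 \<le> 8 * L\<^sup>2 / (real D)\<^sup>2" by simp
  show ?thesis
  proof (cases "x = 0")
    case True thus ?thesis using rhs0 L_def by simp
  next
    case False
    hence xp: "x > 0" using x by auto
    show ?thesis
    proof (cases "x \<ge> 1 / (real D)\<^sup>2")
      case True
      have "ln x \<ge> ln (1/(real D)\<^sup>2)" using True Dp xp by (subst ln_le_cancel_iff) auto
      hence "ln x \<ge> - 2 * L" using Dp by (simp add: L_def ln_div ln_realpow)
      moreover have "ln x \<le> 0" using x xp by simp
      ultimately have "(- ln x)\<^sup>2 \<le> (2*L)\<^sup>2" by (intro power_mono) auto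
      hence "(ln x)\<^sup>2 \<le> 4 * L\<^sup>2" by (simp add: power_mult_distrib)
      hence "x * (ln x)\<^sup>2 \<le> x * (4 * L\<^sup>2)" using x by (intro mult_left_mono) auto
      hence "x * (ln x)\<^sup>2 \<le> 4 * L\<^sup>2 * x + 8 * L\<^sup>2 / (real D)\<^sup>2" using rhs0 mult.commute[of x "4*L\<^sup>2"] by linarith
      thus ?thesis using False by (simp add: L_def)
    next
      case False2: False
      define y where "y = x * (real D)\<^sup>2"
      have y: "0 < y" "y \<le> 1" using False2 xp Dp by (auto simp: y_def field_simps)
      have xy: "x = y / (real D)\<^sup>2" using Dp by (simp add: y_def)
      have lnx: "ln x = - (2*L + ln (1/y))" using y Dp by (simp add: xy L_def ln_div ln_realpow)
      have "x * (ln x)\<^sup>2 = x * (2*L + ln (1/y))\<^sup>2" by (simp only: lnx power2_minus)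
      also have "\<dots> = (y / (real D)\<^sup>2) * (2*L + ln (1/y))\<^sup>2" by (simp only: xy)
      also have "\<dots> = (y * (4*L\<^sup>2) + 4 * L * (y * ln (1/y)) + y * (ln (1/y))\<^sup>2) / (real D)\<^sup>2"
        by (simp add: power2_sum field_simps)
      also have "\<dots> \<le> (4*L\<^sup>2 + 4 * L * (1/exp 1) + 4/(exp 1)\<^sup>2) / (real D)\<^sup>2"
      proof (intro divide_right_mono add_mono)
        show "y * (4 * L\<^sup>2) \<le> 4 * L\<^sup>2" using y mult_right_mono[of y 1 "4*L\<^sup>2"] by simp
        show "4 * L * (y * ln (1 / y)) \<le> 4 * L * (1 / exp 1)" using xlog[OF y] L by (intro mult_left_mono) auto
        show "y * (ln (1 / y))\<^sup>2 \<le> 4 / (exp 1)\<^sup>2" using xlog2[OF y] .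
      qed simp
      also have "\<dots> \<le> 8 * L\<^sup>2 / (real D)\<^sup>2"
      proof (intro divide_right_mono)
        have E1: "0 \<le> 1/exp (1::real)" by simp
        have E2: "1/exp 1 \<le> (20/53::real)" using exp1_ge by (simp add: field_simps)
        note E = E1 E2
        have "L * (1/exp 1) + (1/exp 1)^2 \<le> L^2" by (rule numeric[OF L E])
        thus "4 * L\<^sup>2 + 4 * L * (1 / exp 1) + 4 / (exp 1)\<^sup>2 \<le> 8 * L\<^sup>2" by (simp add: power_divide)
      qed simp
      finally have "x * (ln x)\<^sup>2 \<le> 8 * L\<^sup>2 / (real D)\<^sup>2" .
      moreover have "0 \<le> 4 * L\<^sup>2 * x" using xp by simp
      ultimately have "x * (ln x)\<^sup>2 \<le> 4 * L\<^sup>2 * x + 8 * L\<^sup>2 / (real D)\<^sup>2" by linarith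
      thus ?thesis using False by (simp add: L_def)
    qed
  qed
qed


lemma sum2pt:
  fixes f :: "nat \<Rightarrow> 'a::comm_ring_1"
  assumes "k < D" "l < D" "k \<noteq> l"
  shows "(\<Sum>i<D. f i * (if i = k then a else if i = l then b else 0)) = f k * a + f l * b"
proof -
  have "(\<Sum>i<D. f i * (if i = k then a else if i = l then b else 0))
      = (\<Sum>i<D. (if i = k then f k * a else 0) + (if i = l then f l * b else 0))"
    using assms by (intro sum.cong) auto
  also have "\<dots> = f k * a + f l * b" using assms by (simp add: sum.distrib)
  finally show ?thesis .
qed

lemma sum1pt:
  fixes f :: "nat \<Rightarrow> 'a::comm_ring_1"
  assumes "k < D"
  shows "(\<Sum>i<D. f i * (if i = k then a else 0)) = f k * a"
proof -
  have "(\<Sum>i<D. f i * (if i = k then a else 0)) = (\<Sum>i<D. (if i = k then f k * a else 0))"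
    by (intro sum.cong) auto
  thus ?thesis using assms by simp
qed

lemma cnj_if2: "cnj (if i = k then a else if i = l then b else 0) = (if i = k then cnj a else if i = l then cnj b else 0)"
  by auto

lemma qf2:
  fixes D k l :: nat and \<rho> :: "nat \<Rightarrow> nat \<Rightarrow> complex"
  assumes "k < D" "l < D" "k \<noteq> l"
  shows "(\<Sum>k'<D. \<Sum>l'<D. cnj ((\<lambda>i. if i = k then \<alpha> else if i = l then \<beta> else 0) k') * \<rho> k' l' * (\<lambda>i. if i = k then \<alpha> else if i = l then \<beta> else 0) l')
     = cnj \<alpha> * \<rho> k k * \<alpha> + cnj \<alpha> * \<rho> k l * \<beta> + cnj \<beta> * \<rho> l k * \<alpha> + cnj \<beta> * \<rho> l l * \<beta>"
proof -
  have "(\<Sum>k'<D. \<Sum>l'<D. cnj ((\<lambda>i. if i = k then \<alpha> else if i = l then \<beta> else 0) k') * \<rho> k' l' * (\<lambda>i. if i = k then \<alpha> else if i = l then \<beta> else 0) l')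
     = (\<Sum>k'<D. (\<rho> k' k * \<alpha> + \<rho> k' l * \<beta>) * (if k' = k then cnj \<alpha> else if k' = l then cnj \<beta> else 0))"
  proof (intro sum.cong refl)
    fix k' assume "k' \<in> {..<D}"
    have "(\<Sum>l'<D. cnj ((\<lambda>i. if i = k then \<alpha> else if i = l then \<beta> else 0) k') * \<rho> k' l' * (\<lambda>i. if i = k then \<alpha> else if i = l then \<beta> else 0) l')
       = cnj ((\<lambda>i. if i = k then \<alpha> else if i = l then \<beta> else 0) k') * (\<Sum>l'<D. \<rho> k' l' * (if l' = k then \<alpha> else if l' = l then \<beta> else 0))"
      by (simp add: sum_distrib_left mult.assoc)
    also have "\<dots> = cnj ((\<lambda>i. if i = k then \<alpha> else if i = l then \<beta> else 0) k') * (\<rho> k' k * \<alpha> + \<rho> k' l * \<beta>)"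
      by (subst sum2pt[OF assms]) (rule refl)
    finally show "(\<Sum>l'<D. cnj ((\<lambda>i. if i = k then \<alpha> else if i = l then \<beta> else 0) k') * \<rho> k' l' * (\<lambda>i. if i = k then \<alpha> else if i = l then \<beta> else 0) l')
       = (\<rho> k' k * \<alpha> + \<rho> k' l * \<beta>) * (if k' = k then cnj \<alpha> else if k' = l then cnj \<beta> else 0)"
      by (simp only: cnj_if2 mult.commute)
  qed
  also have "\<dots> = (\<rho> k k * \<alpha> + \<rho> k l * \<beta>) * cnj \<alpha> + (\<rho> l k * \<alpha> + \<rho> l l * \<beta>) * cnj \<beta>"
    by (rule sum2pt[OF assms])
  finally show ?thesis by (simp add: algebra_simps)
qed

lemma qf1:
  fixes D k :: nat and \<rho> :: "nat \<Rightarrow> nat \<Rightarrow> complex"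
  assumes "k < D"
  shows "(\<Sum>k'<D. \<Sum>l'<D. cnj ((\<lambda>i. if i = k then \<alpha> else 0) k') * \<rho> k' l' * (\<lambda>i. if i = k then \<alpha> else 0) l')
     = cnj \<alpha> * \<rho> k k * \<alpha>"
proof -
  have "(\<Sum>k'<D. \<Sum>l'<D. cnj ((\<lambda>i. if i = k then \<alpha> else 0) k') * \<rho> k' l' * (\<lambda>i. if i = k then \<alpha> else 0) l')
     = (\<Sum>k'<D. (\<rho> k' k * \<alpha>) * (if k' = k then cnj \<alpha> else 0))"
  proof (intro sum.cong refl)
    fix k' assume "k' \<in> {..<D}"
    have "(\<Sum>l'<D. cnj ((\<lambda>i. if i = k then \<alpha> else 0) k') * \<rho> k' l' * (\<lambda>i. if i = k then \<alpha> else 0) l')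
       = cnj ((\<lambda>i. if i = k then \<alpha> else 0) k') * (\<Sum>l'<D. \<rho> k' l' * (if l' = k then \<alpha> else 0))"
      by (simp add: sum_distrib_left mult.assoc)
    also have "\<dots> = cnj ((\<lambda>i. if i = k then \<alpha> else 0) k') * (\<rho> k' k * \<alpha>)"
      by (subst sum1pt[OF assms]) (rule refl)
    finally show "(\<Sum>l'<D. cnj ((\<lambda>i. if i = k then \<alpha> else 0) k') * \<rho> k' l' * (\<lambda>i. if i = k then \<alpha> else 0) l')
       = (\<rho> k' k * \<alpha>) * (if k' = k then cnj \<alpha> else 0)"
      by (simp add: mult.commute)
  qed
  also have "\<dots> = cnj \<alpha> * \<rho> k k * \<alpha>" by (subst sum1pt[OF assms]) (simp add: algebra_simps)
  finally show ?thesis .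
qed


lemma dens_diag:
  assumes "density_matrix D \<rho>" "k < D"
  shows "\<rho> k k = complex_of_real (Re (\<rho> k k))" "Re (\<rho> k k) \<ge> 0"
proof -
  have all: "\<And>x. Im (\<Sum>k<D. \<Sum>l<D. cnj (x k) * \<rho> k l * x l) = 0 \<and> Re (\<Sum>k<D. \<Sum>l<D. cnj (x k) * \<rho> k l * x l) \<ge> 0"
    using assms(1) unfolding density_matrix_def Let_def by blast
  have "Im (cnj 1 * \<rho> k k * 1) = 0 \<and> Re (cnj 1 * \<rho> k k * 1) \<ge> 0"
    using all[of "\<lambda>i. if i = k then 1 else 0"] unfolding qf1[OF assms(2)] .
  thus "\<rho> k k = complex_of_real (Re (\<rho> k k))" "Re (\<rho> k k) \<ge> 0" by (auto simp: complex_eq_iff)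
qed

lemma dens_herm:
  assumes "density_matrix D \<rho>" "k < D" "l < D"
  shows "\<rho> l k = cnj (\<rho> k l)"
proof (cases "k = l")
  case True
  have "cnj (\<rho> k k) = \<rho> k k" by (subst (1 2) dens_diag(1)[OF assms(1,2)]) simp
  thus ?thesis using True by simp
next
  case False
  have all: "\<And>x. Im (\<Sum>k<D. \<Sum>l<D. cnj (x k) * \<rho> k l * x l) = 0"
    using assms(1) unfolding density_matrix_def Let_def by blast
  have Q: "Im (cnj \<alpha> * \<rho> k k * \<alpha> + cnj \<alpha> * \<rho> k l * \<beta> + cnj \<beta> * \<rho> l k * \<alpha> + cnj \<beta> * \<rho> l l * \<beta>) = 0" for \<alpha> \<beta>
    using all[of "\<lambda>i. if i = k then \<alpha> else if i = l then \<beta> else 0"] unfolding qf2[OF assms(2,3) False] .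
  have dk: "Im (\<rho> k k) = 0" "Im (\<rho> l l) = 0"
    using arg_cong[OF dens_diag(1)[OF assms(1,2)], of Im] arg_cong[OF dens_diag(1)[OF assms(1,3)], of Im] by simp_all
  have 1: "Im (\<rho> k l) + Im (\<rho> l k) = 0" using Q[of 1 1] dk by simp
  have 2: "Re (\<rho> k l) - Re (\<rho> l k) = 0" using Q[of 1 \<i>] dk by simp
  show ?thesis using 1 2 by (simp add: complex_eq_iff)
qed

lemma ring4:
  fixes z P K S T :: complex
  shows "S * K * S + S * z * (- T * cnj z) + (- T * z) * cnj z * S + (- T * z) * P * (- T * cnj z)
       = S * K * S - 2 * S * T * (z * cnj z) + T * T * P * (z * cnj z)"
  by (simp add: algebra_simps)

lemma dens_bound:
  assumes "density_matrix D \<rho>" "k < D" "l < D" "k \<noteq> l"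
  shows "(cmod (\<rho> k l))\<^sup>2 \<le> Re (\<rho> k k) * Re (\<rho> l l)"
proof -
  define pk where "pk = Re (\<rho> k k)"
  define pl where "pl = Re (\<rho> l l)"
  define z where "z = \<rho> k l"
  define c where "c = (cmod z)\<^sup>2"
  have pk: "\<rho> k k = complex_of_real pk" "pk \<ge> 0" using dens_diag[OF assms(1,2)] pk_def by auto
  have pl: "\<rho> l l = complex_of_real pl" "pl \<ge> 0" using dens_diag[OF assms(1,3)] pl_def by auto
  have h: "\<rho> l k = cnj z" using dens_herm[OF assms(1-3)] z_def by simp
  have c0: "c \<ge> 0" by (simp add: c_def)
  have all: "\<And>x. Re (\<Sum>k<D. \<Sum>l<D. cnj (x k) * \<rho> k l * x l) \<ge> 0"
    using assms(1) unfolding density_matrix_def Let_def by blast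
  have Q: "Re (cnj \<alpha> * \<rho> k k * \<alpha> + cnj \<alpha> * \<rho> k l * \<beta> + cnj \<beta> * \<rho> l k * \<alpha> + cnj \<beta> * \<rho> l l * \<beta>) \<ge> 0" for \<alpha> \<beta>
    using all[of "\<lambda>i. if i = k then \<alpha> else if i = l then \<beta> else 0"] unfolding qf2[OF assms(2,3,4)] .
  have key: "s^2 * pk - 2 * s * t * c + t^2 * c * pl \<ge> 0" for s t :: real
  proof -
    have zc: "z * cnj z = complex_of_real c" unfolding c_def by (rule complex_norm_square[symmetric])
    have cs: "cnj (complex_of_real s) = complex_of_real s" by simp
    have ct: "cnj (- complex_of_real t * cnj z) = - complex_of_real t * z" by simp
    have "cnj (complex_of_real s) * \<rho> k k * complex_of_real s + cnj (complex_of_real s) * \<rho> k l * (- complex_of_real t * cnj z)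
       + cnj (- complex_of_real t * cnj z) * \<rho> l k * complex_of_real s + cnj (- complex_of_real t * cnj z) * \<rho> l l * (- complex_of_real t * cnj z)
       = complex_of_real s * complex_of_real pk * complex_of_real s - 2 * complex_of_real s * complex_of_real t * (z * cnj z)
         + complex_of_real t * complex_of_real t * complex_of_real pl * (z * cnj z)"
      unfolding cs ct pk(1) h z_def[symmetric] pl(1) by (rule ring4)
    also have "\<dots> = complex_of_real (s^2 * pk - 2 * s * t * c + t^2 * c * pl)"
      unfolding zc by (simp add: power2_eq_square)
    finally have "Re (cnj (complex_of_real s) * \<rho> k k * complex_of_real s + cnj (complex_of_real s) * \<rho> k l * (- complex_of_real t * cnj z)
       + cnj (- complex_of_real t * cnj z) * \<rho> l k * complex_of_real s + cnj (- complex_of_real t * cnj z) * \<rho> l l * (- complex_of_real t * cnj z))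
       = s^2 * pk - 2 * s * t * c + t^2 * c * pl"
      by (simp only: Re_complex_of_real)
    thus ?thesis using Q by metis
  qed
  have "c \<le> pk * pl"
  proof (cases "c = 0")
    case True thus ?thesis using pk pl by simp
  next
    case cnz: False
    hence cp: "c > 0" using c0 by simp
    show ?thesis
    proof (cases "pk = 0")
      case True
      have "(pl+1)^2 * pk - 2 * (pl+1) * 1 * c + 1^2 * c * pl \<ge> 0" by (rule key)
      hence "- c * pl - 2 * c \<ge> 0" using True by (simp add: algebra_simps)
      moreover have "c * pl \<ge> 0" using c0 pl by simp
      ultimately show ?thesis using cp by linarith
    next
      case False
      hence pkp: "pk > 0" using pk by simp
      have "c^2 * pk - 2 * c * pk * c + pk^2 * c * pl \<ge> 0" by (rule key)
      hence "(c * pk) * (pk * pl - c) \<ge> 0" by (simp add: algebra_simps power2_eq_square)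
      moreover have "c * pk > 0" using cp pkp by simp
      ultimately have "pk * pl - c \<ge> 0" by (simp add: zero_le_mult_iff)
      thus ?thesis by simp
    qed
  qed
  thus ?thesis unfolding c_def z_def pk_def pl_def .
qed


lemma unit_col: assumes "unitary_matrix D U" "k < D"
  shows "(\<Sum>m<D. (cmod (U m k))\<^sup>2) = 1"
proof -
  have "(\<Sum>m<D. U m k * cnj (U m k)) = 1" using assms unfolding unitary_matrix_def
    by (auto simp: mult.commute)
  moreover have "(\<Sum>m<D. U m k * cnj (U m k)) = complex_of_real (\<Sum>m<D. (cmod (U m k))\<^sup>2)"
    unfolding of_real_sum by (intro sum.cong refl) (rule complex_norm_square[symmetric])
  ultimately have "complex_of_real (\<Sum>m<D. (cmod (U m k))\<^sup>2) = 1" by simp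
  thus ?thesis by (metis of_real_eq_1_iff)
qed



lemma swap4: "(\<Sum>m\<in>A. \<Sum>n\<in>A. \<Sum>k\<in>A. \<Sum>l\<in>A. F m n k l) = (\<Sum>k\<in>A. \<Sum>l\<in>A. \<Sum>m\<in>A. \<Sum>n\<in>A. F m n k l)"
proof -
  have "(\<Sum>m\<in>A. \<Sum>n\<in>A. \<Sum>k\<in>A. \<Sum>l\<in>A. F m n k l) = (\<Sum>m\<in>A. \<Sum>k\<in>A. \<Sum>n\<in>A. \<Sum>l\<in>A. F m n k l)"
    by (rule sum.cong[OF refl], rule sum.swap)
  also have "\<dots> = (\<Sum>m\<in>A. \<Sum>k\<in>A. \<Sum>l\<in>A. \<Sum>n\<in>A. F m n k l)"
    by (rule sum.cong[OF refl], rule sum.cong[OF refl], rule sum.swap)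
  also have "\<dots> = (\<Sum>k\<in>A. \<Sum>m\<in>A. \<Sum>l\<in>A. \<Sum>n\<in>A. F m n k l)"
    by (rule sum.swap)
  also have "\<dots> = (\<Sum>k\<in>A. \<Sum>l\<in>A. \<Sum>m\<in>A. \<Sum>n\<in>A. F m n k l)"
    by (rule sum.cong[OF refl], rule sum.swap)
  finally show ?thesis .
qed

lemma swap3: "(\<Sum>l\<in>A. \<Sum>m\<in>A. \<Sum>n\<in>A. F l m n) = (\<Sum>m\<in>A. \<Sum>n\<in>A. \<Sum>l\<in>A. F l m n)"
proof -
  have "(\<Sum>l\<in>A. \<Sum>m\<in>A. \<Sum>n\<in>A. F l m n) = (\<Sum>m\<in>A. \<Sum>l\<in>A. \<Sum>n\<in>A. F l m n)"
    by (rule sum.swap)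
  also have "\<dots> = (\<Sum>m\<in>A. \<Sum>n\<in>A. \<Sum>l\<in>A. F l m n)"
    by (rule sum.cong[OF refl], rule sum.swap)
  finally show ?thesis .
qed


theorem theorem3:
  fixes D :: nat and \<rho> U :: "nat \<Rightarrow> nat \<Rightarrow> complex"
  assumes "D \<ge> 2"
    and "density_matrix D \<rho>"
    and "unitary_matrix D U"
  shows "R_val D U \<rho> \<le> 5 * (ln (real D))\<^sup>2 / sqrt (D_eff D \<rho>)
                     + 8 * (ln (real D))\<^sup>2 / real D
                     + 4 * (ln (real D))\<^sup>2 / (real D)\<^sup>2"
proof -
  note D = assms(1) and dens = assms(2) and uni = assms(3)
  define p where "p k = Re (\<rho> k k)" for k
  define \<mu> where "\<mu> m = mu D U \<rho> m" for m
  define a where "a m = (if \<mu> m = 0 then 0 else ln (\<mu> m))" for m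
  define c where "c k l = (cmod (\<rho> k l))\<^sup>2" for k l
  define w where "w k l = (\<Sum>m<D. U m k * cnj (U m l) * complex_of_real (a m))" for k l
  define S where "S = (\<Sum>n<D. (p n)\<^sup>2)"
  define L where "L = ln (real D)"
  have p0: "p k \<ge> 0" if "k < D" for k using dens_diag[OF dens that] p_def by simp
  have psum: "(\<Sum>k<D. p k) = 1"
  proof -
    have "(\<Sum>k<D. \<rho> k k) = 1" using dens unfolding density_matrix_def by blast
    hence "Re (\<Sum>k<D. \<rho> k k) = 1" by simp
    thus ?thesis by (simp add: p_def)
  qed
  have p1: "p k \<le> 1" if "k < D" for k
    using member_le_sum[of k "{..<D}" p] p0 psum that by auto
  have mu_def': "\<mu> m = (\<Sum>k<D. (cmod (U m k))\<^sup>2 * p k)" for m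
    by (simp add: \<mu>_def mu_def p_def)
  have mu0: "\<mu> m \<ge> 0" for m unfolding mu_def' using p0 by (intro sum_nonneg) auto
  have musum: "(\<Sum>m<D. \<mu> m) = 1"
  proof -
    have "(\<Sum>m<D. \<mu> m) = (\<Sum>m<D. \<Sum>k<D. (cmod (U m k))\<^sup>2 * p k)"
      unfolding mu_def' by simp
    also have "\<dots> = (\<Sum>k<D. \<Sum>m<D. (cmod (U m k))\<^sup>2 * p k)" by (rule sum.swap)
    also have "\<dots> = (\<Sum>k<D. (\<Sum>m<D. (cmod (U m k))\<^sup>2) * p k)" by (simp add: sum_distrib_right)
    also have "\<dots> = (\<Sum>k<D. p k)" using unit_col[OF uni] by (intro sum.cong) auto
    finally show ?thesis using psum by simp
  qed
  have mu1: "\<mu> m \<le> 1" if "m < D" for m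
    using member_le_sum[of m "{..<D}" \<mu>] mu0 musum that by auto
  have step1: "R_val D U \<rho> = Re (\<Sum>m<D. \<Sum>n<D. nu D U \<rho> m n * complex_of_real (a m * a n))"
    unfolding R_val_def \<mu>_def[symmetric] a_def by (intro arg_cong[where f=Re] sum.cong refl) auto
  have step2: "(\<Sum>m<D. \<Sum>n<D. nu D U \<rho> m n * complex_of_real (a m * a n))
     = (\<Sum>k<D. \<Sum>l<D. if k = l then 0 else complex_of_real (c k l) * (w k l * cnj (w k l)))"
  proof -
    define F where "F m n k l = (if k = l then 0 else complex_of_real (c k l) *
        ((U m k * cnj (U m l) * complex_of_real (a m)) * (cnj (U n k) * U n l * complex_of_real (a n))))" for m n k l
    have "(\<Sum>m<D. \<Sum>n<D. nu D U \<rho> m n * complex_of_real (a m * a n)) = (\<Sum>m<D. \<Sum>n<D. \<Sum>k<D. \<Sum>l<D. F m n k l)"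
      unfolding nu_def sum_distrib_right
      by (intro sum.cong refl) (simp add: F_def c_def algebra_simps)
    also have "\<dots> = (\<Sum>k<D. \<Sum>l<D. \<Sum>m<D. \<Sum>n<D. F m n k l)" by (rule swap4)
    also have "\<dots> = (\<Sum>k<D. \<Sum>l<D. if k = l then 0 else complex_of_real (c k l) * (w k l * cnj (w k l)))"
    proof (intro sum.cong refl)
      fix k l
      have cw: "cnj (w k l) = (\<Sum>n<D. cnj (U n k) * U n l * complex_of_real (a n))"
        unfolding w_def by (simp add: cnj_sum)
      show "(\<Sum>m<D. \<Sum>n<D. F m n k l) = (if k = l then 0 else complex_of_real (c k l) * (w k l * cnj (w k l)))"
      proof (cases "k = l")
        case True thus ?thesis by (simp add: F_def)
      next
        case False
        have "complex_of_real (c k l) * ((\<Sum>m<D. U m k * cnj (U m l) * complex_of_real (a m)) * (\<Sum>n<D. cnj (U n k) * U n l * complex_of_real (a n)))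
          = (\<Sum>m<D. \<Sum>n<D. complex_of_real (c k l) * ((U m k * cnj (U m l) * complex_of_real (a m)) * (cnj (U n k) * U n l * complex_of_real (a n))))"
          unfolding sum_product by (simp only: sum_distrib_left)
        thus ?thesis using False unfolding cw unfolding w_def F_def by simp
      qed
    qed
    finally show ?thesis .
  qed
  have step3: "Re (\<Sum>k<D. \<Sum>l<D. if k = l then 0 else complex_of_real (c k l) * (w k l * cnj (w k l)))
     = (\<Sum>k<D. \<Sum>l<D. if k = l then 0 else c k l * (cmod (w k l))\<^sup>2)"
    unfolding Re_sum by (intro sum.cong refl) (simp add: complex_mult_cnj cmod_power2)
  have step4: "(\<Sum>k<D. \<Sum>l<D. if k = l then 0 else c k l * (cmod (w k l))\<^sup>2)
      \<le> (\<Sum>k<D. \<Sum>l<D. p k * p l * (cmod (w k l))\<^sup>2)"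
  proof (intro sum_mono)
    fix k l assume k: "k \<in> {..<D}" and l: "l \<in> {..<D}"
    show "(if k = l then 0 else c k l * (cmod (w k l))\<^sup>2) \<le> p k * p l * (cmod (w k l))\<^sup>2"
    proof (cases "k = l")
      case True thus ?thesis using p0 k l by simp
    next
      case False
      have "c k l \<le> p k * p l" using dens_bound[OF dens _ _ False] k l by (simp add: c_def p_def)
      thus ?thesis using False by (simp add: mult_right_mono)
    qed
  qed
  have pS: "p k \<le> sqrt S" if "k < D" for k
  proof -
    have "(p k)\<^sup>2 \<le> S" unfolding S_def using that by (intro member_le_sum) auto
    hence "sqrt ((p k)\<^sup>2) \<le> sqrt S" by (rule real_sqrt_le_mono)
    thus ?thesis using p0[OF that] by simp
  qed
  have step5: "(\<Sum>k<D. \<Sum>l<D. p k * p l * (cmod (w k l))\<^sup>2) \<le> sqrt S * (\<Sum>k<D. p k * (\<Sum>l<D. (cmod (w k l))\<^sup>2))"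
  proof -
    have "(\<Sum>k<D. \<Sum>l<D. p k * p l * (cmod (w k l))\<^sup>2) \<le> (\<Sum>k<D. \<Sum>l<D. p k * sqrt S * (cmod (w k l))\<^sup>2)"
    proof (intro sum_mono)
      fix k l assume k: "k \<in> {..<D}" and l: "l \<in> {..<D}"
      show "p k * p l * (cmod (w k l))\<^sup>2 \<le> p k * sqrt S * (cmod (w k l))\<^sup>2"
        using p0[of k] pS[of l] k l by (intro mult_right_mono mult_left_mono) auto
    qed
    also have "\<dots> = sqrt S * (\<Sum>k<D. p k * (\<Sum>l<D. (cmod (w k l))\<^sup>2))"
      by (simp add: sum_distrib_left algebra_simps)
    finally show ?thesis .
  qed
  have step7: "(\<Sum>l<D. (cmod (w k l))\<^sup>2) = (\<Sum>m<D. (cmod (U m k))\<^sup>2 * (a m)\<^sup>2)" if k: "k < D" for k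
  proof -
    define X where "X m = U m k * complex_of_real (a m)" for m
    have wX: "w k l = (\<Sum>m<D. X m * cnj (U m l))" for l
      unfolding w_def X_def by (intro sum.cong refl) (simp add: algebra_simps)
    have cwX: "cnj (w k l) = (\<Sum>n<D. cnj (X n) * U n l)" for l
      unfolding wX by (simp add: cnj_sum)
    have "complex_of_real (\<Sum>l<D. (cmod (w k l))\<^sup>2) = (\<Sum>l<D. w k l * cnj (w k l))"
      unfolding of_real_sum by (intro sum.cong refl) (rule complex_norm_square)
    also have "\<dots> = (\<Sum>l<D. \<Sum>m<D. \<Sum>n<D. X m * cnj (X n) * (U n l * cnj (U m l)))"
    proof (intro sum.cong refl)
      fix l
      show "w k l * cnj (w k l) = (\<Sum>m<D. \<Sum>n<D. X m * cnj (X n) * (U n l * cnj (U m l)))"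
        unfolding cwX unfolding wX sum_product by (intro sum.cong refl) (simp add: algebra_simps)
    qed
    also have "\<dots> = (\<Sum>m<D. \<Sum>n<D. \<Sum>l<D. X m * cnj (X n) * (U n l * cnj (U m l)))"
      by (rule swap3)
    also have "\<dots> = (\<Sum>m<D. \<Sum>n<D. X m * cnj (X n) * (if n = m then 1 else 0))"
    proof (intro sum.cong refl)
      fix m n assume m: "m \<in> {..<D}" and n: "n \<in> {..<D}"
      have "(\<Sum>l<D. U n l * cnj (U m l)) = (if n = m then 1 else 0)"
        using uni m n unfolding unitary_matrix_def by auto
      thus "(\<Sum>l<D. X m * cnj (X n) * (U n l * cnj (U m l))) = X m * cnj (X n) * (if n = m then 1 else 0)"
        by (simp add: sum_distrib_left[symmetric])
    qed
    also have "\<dots> = (\<Sum>m<D. X m * cnj (X m))"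
      by (intro sum.cong refl) (simp add: if_distrib cong: if_cong)
    also have "\<dots> = complex_of_real (\<Sum>m<D. (cmod (U m k))\<^sup>2 * (a m)\<^sup>2)"
      unfolding of_real_sum
    proof (intro sum.cong refl)
      fix m
      have "X m * cnj (X m) = complex_of_real ((cmod (X m))\<^sup>2)" by (rule complex_norm_square[symmetric])
      also have "(cmod (X m))\<^sup>2 = (cmod (U m k))\<^sup>2 * (a m)\<^sup>2"
        unfolding X_def norm_mult by (simp add: power_mult_distrib)
      finally show "X m * cnj (X m) = complex_of_real ((cmod (U m k))\<^sup>2 * (a m)\<^sup>2)" .
    qed
    finally show ?thesis by (simp only: of_real_eq_iff)
  qed
  have step8: "(\<Sum>k<D. p k * (\<Sum>l<D. (cmod (w k l))\<^sup>2)) = (\<Sum>m<D. \<mu> m * (a m)\<^sup>2)"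
  proof -
    have "(\<Sum>k<D. p k * (\<Sum>l<D. (cmod (w k l))\<^sup>2)) = (\<Sum>k<D. \<Sum>m<D. (cmod (U m k))\<^sup>2 * p k * (a m)\<^sup>2)"
      using step7 by (intro sum.cong refl) (simp add: sum_distrib_left algebra_simps)
    also have "\<dots> = (\<Sum>m<D. \<Sum>k<D. (cmod (U m k))\<^sup>2 * p k * (a m)\<^sup>2)" by (rule sum.swap)
    also have "\<dots> = (\<Sum>m<D. \<mu> m * (a m)\<^sup>2)"
      unfolding mu_def' by (intro sum.cong refl) (simp add: sum_distrib_right)
    finally show ?thesis .
  qed
  have step9: "(\<Sum>m<D. \<mu> m * (a m)\<^sup>2) \<le> 4 * L\<^sup>2 + 8 * L\<^sup>2 / real D"
  proof -
    have "(\<Sum>m<D. \<mu> m * (a m)\<^sup>2) \<le> (\<Sum>m<D. 4 * L\<^sup>2 * \<mu> m + 8 * L\<^sup>2 / (real D)\<^sup>2)"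
    proof (intro sum_mono)
      fix m assume m: "m \<in> {..<D}"
      show "\<mu> m * (a m)\<^sup>2 \<le> 4 * L\<^sup>2 * \<mu> m + 8 * L\<^sup>2 / (real D)\<^sup>2"
        using elem[OF D mu0[of m] mu1[of m]] m unfolding a_def L_def by simp
    qed
    also have "\<dots> = 4 * L\<^sup>2 * (\<Sum>m<D. \<mu> m) + real D * (8 * L\<^sup>2 / (real D)\<^sup>2)"
      by (simp add: sum.distrib sum_distrib_left)
    also have "\<dots> = 4 * L\<^sup>2 + 8 * L\<^sup>2 / real D"
      using musum D by (simp add: power2_eq_square)
    finally show ?thesis .
  qed
  have S1': "S \<le> 1"
  proof -
    have "S \<le> (\<Sum>n<D. p n)" unfolding S_def
    proof (intro sum_mono)
      fix n assume n: "n \<in> {..<D}"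
      have "p n \<ge> 0" "p n \<le> 1" using p0[of n] p1[of n] n by auto
      thus "(p n)\<^sup>2 \<le> p n" using mult_left_mono[of "p n" 1 "p n"] by (simp add: power2_eq_square)
    qed
    thus ?thesis using psum by simp
  qed
  hence S1: "sqrt S \<le> 1" by simp
  have S0': "S \<ge> 0" unfolding S_def by (intro sum_nonneg) auto
  hence S0: "sqrt S \<ge> 0" by simp
  have "R_val D U \<rho> = (\<Sum>k<D. \<Sum>l<D. if k = l then 0 else c k l * (cmod (w k l))\<^sup>2)"
    unfolding step1 step2 by (rule step3)
  also have "\<dots> \<le> sqrt S * (\<Sum>m<D. \<mu> m * (a m)\<^sup>2)"
    using step4 step5 step8 by simp
  also have "\<dots> \<le> sqrt S * (4 * L\<^sup>2 + 8 * L\<^sup>2 / real D)"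
    using step9 S0 by (rule mult_left_mono)
  also have "\<dots> \<le> 5 * L\<^sup>2 * sqrt S + 8 * L\<^sup>2 / real D + 4 * L\<^sup>2 / (real D)\<^sup>2"
  proof -
    have a1: "sqrt S * (4 * L\<^sup>2) \<le> 5 * L\<^sup>2 * sqrt S" using S0 by simp
    have "sqrt S * (8 * L\<^sup>2 / real D) \<le> 1 * (8 * L\<^sup>2 / real D)"
      using S1 by (intro mult_right_mono) auto
    moreover have "0 \<le> 4 * L\<^sup>2 / (real D)\<^sup>2" by simp
    moreover have "sqrt S * (4 * L\<^sup>2 + 8 * L\<^sup>2 / real D) = sqrt S * (4 * L\<^sup>2) + sqrt S * (8 * L\<^sup>2 / real D)"
      by (rule distrib_left)
    ultimately show ?thesis using a1 by linarith
  qed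
  also have "\<dots> = 5 * (ln (real D))\<^sup>2 / sqrt (D_eff D \<rho>) + 8 * (ln (real D))\<^sup>2 / real D + 4 * (ln (real D))\<^sup>2 / (real D)\<^sup>2"
  proof -
    have "D_eff D \<rho> = 1 / S" by (simp add: D_eff_def S_def p_def)
    hence "sqrt (D_eff D \<rho>) = 1 / sqrt S" by (simp add: real_sqrt_divide)
    thus ?thesis by (simp add: L_def)
  qed
  finally show ?thesis .
qed

end
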